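(* Let $\mathcal{M}=(S,E,T)$ be a trivially parametric Markov chain satisfying the standing assumptions below, and let $\{S_0,\dots,S_m\}$ be an equivalence partition of $\mathcal{M}$. Then there exists a graph-preserving valuation $\mathsf{val}$ such that for all $0\le i<j\le m$, all $s_i\in S_i$ and all $s_j\in S_j$, $P_{\mathsf{val}}(s_i)<P_{\mathsf{val}}(s_j)$.
   Context: A trivially parametric Markov chain $\mathcal{M}=(S,E,T)$ consists of a finite set of states $S$, targets $T=\{\mathit{fin},\mathit{fail}\}$ with no outgoing edges, and edges $E\subseteq(S\setminus T)\times S$. A graph-preserving valuation assigns to each non-target $s$ a full-support probability distribution on its successor set $sE$; $P_{\mathsf{val}}(s)$ is the probability of reaching $\mathit{fin}$ from $s$. $s\sim s'$ iff $P_{\mathsf{val}}(s)=P_{\mathsf{val}}(s')$ for all graph-preserving valuations; $\tilde u$ is the equivalence class of $u$. An equivalence partition is a partition $\{S_0,\dots,S_m\}$ of $S$ into non-empty sets such that $S_0=\{\mathit{fail}\}$, $S_m=\{\mathit{fin}\}$, for every non-target $u$ we have $\tilde u\subseteq S_i$ for some $0<i<m$, and every $u\in S_j$ either has successors in some $S_i$ and some $S_k$ with $i<j<k$ or has all its successors in $S_j$. Standing assumptions: the equivalence classes of $\mathit{fin}$ and $\mathit{fail}$ are $\{\mathit{fin}\}$ and $\{\mathit{fail}\}$; no state has a self-loop; every non-target state has exactly two successors. *)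

theory Defs
  imports Main "HOL-Library.Extended_Real"
begin

text \<open>Trivially parametric Markov chains (S, E, T) with targets T = {fin, fail}.\<close>

definition succs :: "('a \<times> 'a) set \<Rightarrow> 'a \<Rightarrow> 'a set" where
  "succs E s = {t. (s, t) \<in> E}"

definition tpmc :: "'a set \<Rightarrow> ('a \<times> 'a) set \<Rightarrow> 'a \<Rightarrow> 'a \<Rightarrow> bool" where
  "tpmc S E fin fail \<longleftrightarrow> finite S \<and> fin \<in> S \<and> fail \<in> S \<and> fin \<noteq> fail
     \<and> E \<subseteq> (S - {fin, fail}) \<times> S"

definition graph_preserving :: "'a set \<Rightarrow> ('a \<times> 'a) set \<Rightarrow> 'a \<Rightarrow> 'a \<Rightarrow> ('a \<Rightarrow> 'a \<Rightarrow> real) \<Rightarrow> bool" where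
  "graph_preserving S E fin fail val \<longleftrightarrow>
     (\<forall>s \<in> S - {fin, fail}. (\<forall>t \<in> succs E s. val s t > 0) \<and> (\<Sum>t \<in> succs E s. val s t) = 1)"

fun reach_within :: "('a \<Rightarrow> 'a \<Rightarrow> real) \<Rightarrow> ('a \<times> 'a) set \<Rightarrow> 'a \<Rightarrow> nat \<Rightarrow> 'a \<Rightarrow> real" where
  "reach_within val E fin 0 s = (if s = fin then 1 else 0)"
| "reach_within val E fin (Suc n) s =
     (if s = fin then 1 else (\<Sum>t \<in> succs E s. val s t * reach_within val E fin n t))"

definition reach_prob :: "('a \<Rightarrow> 'a \<Rightarrow> real) \<Rightarrow> ('a \<times> 'a) set \<Rightarrow> 'a \<Rightarrow> 'a \<Rightarrow> real" where
  "reach_prob val E fin s = (SUP n. reach_within val E fin n s)"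

definition equiv_states :: "'a set \<Rightarrow> ('a \<times> 'a) set \<Rightarrow> 'a \<Rightarrow> 'a \<Rightarrow> 'a \<Rightarrow> 'a \<Rightarrow> bool" where
  "equiv_states S E fin fail s s' \<longleftrightarrow>
     (\<forall>val. graph_preserving S E fin fail val \<longrightarrow> reach_prob val E fin s = reach_prob val E fin s')"

definition eq_class :: "'a set \<Rightarrow> ('a \<times> 'a) set \<Rightarrow> 'a \<Rightarrow> 'a \<Rightarrow> 'a \<Rightarrow> 'a set" where
  "eq_class S E fin fail u = {s \<in> S. equiv_states S E fin fail s u}"

definition standing_assms :: "'a set \<Rightarrow> ('a \<times> 'a) set \<Rightarrow> 'a \<Rightarrow> 'a \<Rightarrow> bool" where
  "standing_assms S E fin fail \<longleftrightarrow>
     eq_class S E fin fail fin = {fin} \<and> eq_class S E fin fail fail = {fail}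
     \<and> (\<forall>s. (s, s) \<notin> E)
     \<and> (\<forall>s \<in> S - {fin, fail}. card (succs E s) = 2)"

definition equiv_partition :: "'a set \<Rightarrow> ('a \<times> 'a) set \<Rightarrow> 'a \<Rightarrow> 'a \<Rightarrow> (nat \<Rightarrow> 'a set) \<Rightarrow> nat \<Rightarrow> bool" where
  "equiv_partition S E fin fail Sp m \<longleftrightarrow>
     (\<forall>i \<le> m. Sp i \<noteq> {})
     \<and> (\<forall>i \<le> m. \<forall>j \<le> m. i \<noteq> j \<longrightarrow> Sp i \<inter> Sp j = {})
     \<and> (\<Union>i \<le> m. Sp i) = S
     \<and> Sp 0 = {fail} \<and> Sp m = {fin}
     \<and> (\<forall>u \<in> S - {fin, fail}. \<exists>i. 0 < i \<and> i < m \<and> eq_class S E fin fail u \<subseteq> Sp i)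
     \<and> (\<forall>j \<le> m. \<forall>u \<in> Sp j.
          (\<exists>i k. i < j \<and> j < k \<and> k \<le> m \<and> succs E u \<inter> Sp i \<noteq> {} \<and> succs E u \<inter> Sp k \<noteq> {})
          \<or> succs E u \<subseteq> Sp j)"

end

theory Submission
  imports Defs
begin

lemma succs_sub:
  assumes "tpmc S E fin fail"
  shows "succs E s \<subseteq> S" and "s \<notin> S - {fin, fail} \<Longrightarrow> succs E s = {}"
    and "finite (succs E s)"
proof -
  show 1: "succs E s \<subseteq> S" using assms unfolding tpmc_def succs_def by auto
  show "s \<notin> S - {fin, fail} \<Longrightarrow> succs E s = {}" using assms unfolding tpmc_def succs_def by auto
  show "finite (succs E s)" using 1 assms unfolding tpmc_def by (auto intro: finite_subset)
qed

lemma closed_zero: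
  assumes "\<forall>s\<in>C. succs E s \<subseteq> C" "fin \<notin> C"
  shows "s \<in> C \<Longrightarrow> reach_within val E fin n s = 0"
proof (induction n arbitrary: s)
  case 0 then show ?case using assms by auto
next
  case (Suc n)
  have "\<forall>t\<in>succs E s. val s t * reach_within val E fin n t = 0"
    using Suc assms by auto
  then have "(\<Sum>t\<in>succs E s. val s t * reach_within val E fin n t) = 0"
    by (intro sum.neutral) auto
  then show ?case using Suc assms by auto
qed

lemma main_conv:
  fixes f :: "'a \<Rightarrow> real"
  assumes tp: "tpmc S E fin fail"
    and st: "standing_assms S E fin fail"
    and gp: "graph_preserving S E fin fail val"
    and ffin: "f fin = 1" and ffail: "f fail = 0" and fnn: "\<forall>s\<in>S. 0 \<le> f s"
    and fx: "\<forall>s\<in>S-{fin,fail}. (\<Sum>t\<in>succs E s. val s t * f t) = f s"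
  shows "\<forall>s\<in>S. reach_prob val E fin s = f s"
proof -
  note sS = succs_sub[OF tp]
  have finS: "finite S" and finS': "fin \<in> S" and failS: "fail \<in> S" and nf: "fin \<noteq> fail"
    using tp unfolding tpmc_def by auto
  have pos: "0 < val s t" if "t \<in> succs E s" for s t
  proof -
    have "s \<in> S - {fin, fail}" using sS(2)[of s] that by blast
    then show ?thesis using gp that unfolding graph_preserving_def by auto
  qed
  have sum1: "(\<Sum>t\<in>succs E s. val s t) = 1" if "s \<in> S - {fin, fail}" for s
    using gp that unfolding graph_preserving_def by auto
  have nn: "0 \<le> reach_within val E fin n s" for n s
  proof (induction n arbitrary: s)
    case 0 then show ?case by auto
  next
    case (Suc n) then show ?case
      by (auto intro!: sum_nonneg mult_nonneg_nonneg less_imp_le[OF pos])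
  qed
  have up: "\<forall>s\<in>S. reach_within val E fin n s \<le> f s" for n
  proof (induction n)
    case 0 then show ?case using ffin fnn by auto
  next
    case (Suc n)
    show ?case
    proof
      fix s assume s: "s \<in> S"
      show "reach_within val E fin (Suc n) s \<le> f s"
      proof (cases "s = fin \<or> s = fail")
        case True
        then show ?thesis using ffin ffail sS(2)[of fail] nf by auto
      next
        case False
        then have "s \<in> S - {fin, fail}" using s by auto
        then have "(\<Sum>t\<in>succs E s. val s t * reach_within val E fin n t)
            \<le> (\<Sum>t\<in>succs E s. val s t * f t)"
          using Suc sS(1) by (intro sum_mono mult_left_mono) (auto intro: less_imp_le[OF pos])
        then show ?thesis using fx False \<open>s \<in> S - {fin, fail}\<close> by auto
      qed
    qed
  qed
  have mono: "reach_within val E fin n s \<le> reach_within val E fin (Suc n) s" for n s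
  proof (induction n arbitrary: s)
    case 0 then show ?case
      by (auto intro!: sum_nonneg mult_nonneg_nonneg less_imp_le[OF pos])
  next
    case (Suc n)
    then show ?case
      by (auto intro!: sum_mono mult_left_mono less_imp_le[OF pos])
  qed
  define g where "g s = reach_prob val E fin s" for s
  have lim: "(\<lambda>n. reach_within val E fin n s) \<longlonglongrightarrow> g s" if "s \<in> S" for s
    unfolding g_def reach_prob_def
    by (rule LIMSEQ_incseq_SUP) (use up that in \<open>auto intro!: incseq_SucI mono simp: bdd_above_def\<close>)
  have gle: "g s \<le> f s" if "s \<in> S" for s
    unfolding g_def reach_prob_def using up that by (auto intro!: cSUP_least)
  have rwfin: "reach_within val E fin n fin = 1" for n by (cases n) auto
  have gfin: "g fin = 1" unfolding g_def reach_prob_def rwfin by simp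
  have rwfail: "reach_within val E fin n fail = 0" for n
    using sS(2)[of fail] nf by (cases n) auto
  have gfail: "g fail = 0" unfolding g_def reach_prob_def rwfail by simp
  have grec: "g s = (\<Sum>t\<in>succs E s. val s t * g t)" if s: "s \<in> S - {fin, fail}" for s
  proof -
    have "(\<lambda>n. reach_within val E fin (Suc n) s) \<longlonglongrightarrow> g s"
      using lim[of s] s by (intro LIMSEQ_Suc) auto
    moreover have "(\<lambda>n. reach_within val E fin (Suc n) s) \<longlonglongrightarrow> (\<Sum>t\<in>succs E s. val s t * g t)"
    proof -
      have "(\<lambda>n. \<Sum>t\<in>succs E s. val s t * reach_within val E fin n t) \<longlonglongrightarrow> (\<Sum>t\<in>succs E s. val s t * g t)"
        using lim sS(1) by (intro tendsto_sum tendsto_mult_left) auto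
      then show ?thesis using s by simp
    qed
    ultimately show ?thesis using LIMSEQ_unique by blast
  qed
  define e where "e s = f s - g s" for s
  define M where "M = Max (e ` S)"
  have eM: "e s \<le> M" if "s \<in> S" for s unfolding M_def using finS that by auto
  have M0: "M \<le> 0"
  proof (rule ccontr)
    assume "\<not> M \<le> 0"
    then have Mpos: "M > 0" by simp
    define C where "C = {s\<in>S. e s = M}"
    have "M \<in> e ` S" unfolding M_def using finS finS' by (intro Max_in) auto
    then obtain s0 where s0: "s0 \<in> C" unfolding C_def by auto
    have efin: "e fin = 0" "e fail = 0" unfolding e_def using gfin gfail ffin ffail by auto
    have nC: "fin \<notin> C" "fail \<notin> C" using efin Mpos unfolding C_def by auto
    have closed: "\<forall>s\<in>C. succs E s \<subseteq> C"
    proof (intro ballI subsetI)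
      fix s t assume s: "s \<in> C" and t: "t \<in> succs E s"
      have sS': "s \<in> S - {fin, fail}" using s nC unfolding C_def by auto
      have erec: "e s = (\<Sum>t\<in>succs E s. val s t * e t)"
        using fx sS' grec[OF sS'] unfolding e_def
        by (simp add: right_diff_distrib sum_subtractf)
      have "(\<Sum>t\<in>succs E s. val s t * (M - e t)) = M * (\<Sum>t\<in>succs E s. val s t) - (\<Sum>t\<in>succs E s. val s t * e t)"
        by (simp add: right_diff_distrib sum_subtractf sum_distrib_left mult.commute)
      also have "\<dots> = 0" using sum1[OF sS'] erec s unfolding C_def by auto
      finally have z: "(\<Sum>t\<in>succs E s. val s t * (M - e t)) = 0" .
      have "\<forall>t\<in>succs E s. val s t * (M - e t) = 0"
      proof (rule sum_nonneg_eq_0_iff[OF sS(3), THEN iffD1, OF _ z])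
        fix x assume x: "x \<in> succs E s"
        then have "x \<in> S" using sS(1) by auto
        then show "0 \<le> val s x * (M - e x)" using eM[of x] pos[OF x] by auto
      qed
      then have "e t = M" using t pos[OF t] by auto
      then show "t \<in> C" using t sS(1) unfolding C_def by auto
    qed
    have "reach_within val' E fin n s0 = 0" for val' n
      using closed_zero[OF closed nC(1) s0] .
    then have r0: "reach_prob val' E fin s0 = 0" for val' unfolding reach_prob_def by simp
    have r1: "reach_prob val' E fin fail = 0" for val'
    proof -
      have "reach_within val' E fin n fail = 0" for n
        using sS(2)[of fail] nf by (cases n) auto
      then show ?thesis unfolding reach_prob_def by simp
    qed
    have "s0 \<in> eq_class S E fin fail fail"
      unfolding eq_class_def equiv_states_def using r0 r1 s0 unfolding C_def by auto
    then show False using st s0 nC unfolding standing_assms_def by auto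
  qed
  show ?thesis
  proof
    fix s assume "s \<in> S"
    then show "reach_prob val E fin s = f s" using eM[of s] M0 gle[of s] unfolding e_def g_def by auto
  qed
qed

lemma comb:
  fixes x y z mm :: real
  assumes "z - x > 0" "mm > 0"
  shows "(z - y) / (z - x) * (x / mm) + (y - x) / (z - x) * (z / mm) = y / mm"
proof -
  have h: "(z - y) * x + (y - x) * z = y * (z - x)" by (simp add: algebra_simps)
  have "(z - y) / (z - x) * (x / mm) + (y - x) / (z - x) * (z / mm)
      = ((z - y) * x) / ((z - x) * mm) + ((y - x) * z) / ((z - x) * mm)"
    by (simp add: times_divide_times_eq)
  also have "\<dots> = ((z - y) * x + (y - x) * z) / ((z - x) * mm)"
    by (rule add_divide_distrib[symmetric])
  also have "\<dots> = (y * (z - x)) / ((z - x) * mm)" using h by simp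
  also have "\<dots> = y / mm" using assms by simp
  finally show ?thesis .
qed

theorem lemma18:
  fixes S :: "'a set" and E :: "('a \<times> 'a) set" and fin fail :: 'a
    and Sp :: "nat \<Rightarrow> 'a set" and m :: nat
  assumes "tpmc S E fin fail"
    and "standing_assms S E fin fail"
    and "equiv_partition S E fin fail Sp m"
  shows "\<exists>val. graph_preserving S E fin fail val \<and>
           (\<forall>i j. i < j \<and> j \<le> m \<longrightarrow>
              (\<forall>si \<in> Sp i. \<forall>sj \<in> Sp j. reach_prob val E fin si < reach_prob val E fin sj))"
proof -
  note tp = assms(1) and st = assms(2)
  note sS = succs_sub[OF tp]
  have nf: "fin \<noteq> fail" and finS: "fin \<in> S" and failS: "fail \<in> S" using tp unfolding tpmc_def by auto
  have disj: "\<And>i j. i \<le> m \<Longrightarrow> j \<le> m \<Longrightarrow> i \<noteq> j \<Longrightarrow> Sp i \<inter> Sp j = {}"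
    and un: "(\<Union>i \<le> m. Sp i) = S" and Sp0: "Sp 0 = {fail}" and Spm: "Sp m = {fin}"
    and cond: "\<And>j u. j \<le> m \<Longrightarrow> u \<in> Sp j \<Longrightarrow>
          (\<exists>i k. i < j \<and> j < k \<and> k \<le> m \<and> succs E u \<inter> Sp i \<noteq> {} \<and> succs E u \<inter> Sp k \<noteq> {})
          \<or> succs E u \<subseteq> Sp j"
    using assms(3) unfolding equiv_partition_def by blast+
  have m0: "m > 0" using Sp0 Spm nf by (cases m) auto
  define idx where "idx s = (THE j. j \<le> m \<and> s \<in> Sp j)" for s
  have idx: "idx s = j" if "s \<in> Sp j" "j \<le> m" for s j
    unfolding idx_def
  proof (rule the_equality)
    show "j \<le> m \<and> s \<in> Sp j" using that by auto
    fix j' assume "j' \<le> m \<and> s \<in> Sp j'"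
    then show "j' = j" using disj[of j' j] that by auto
  qed
  have inS: "\<exists>j\<le>m. s \<in> Sp j" if "s \<in> S" for s using un that by auto
  define f where "f s = real (idx s) / real m" for s
  have fSp: "f s = real j / real m" if "s \<in> Sp j" "j \<le> m" for s j
    unfolding f_def using idx[OF that] by simp
  have ffin: "f fin = 1" using fSp[of fin m] Spm m0 by auto
  have ffail: "f fail = 0" using fSp[of fail 0] Sp0 by auto
  have fnn: "\<forall>s\<in>S. 0 \<le> f s" unfolding f_def by auto
  have exw: "\<forall>u\<in>S-{fin,fail}. \<exists>w. (\<forall>t\<in>succs E u. w t > 0) \<and> sum w (succs E u) = 1
               \<and> (\<Sum>t\<in>succs E u. w t * f t) = f u"
  proof
    fix u assume u: "u \<in> S - {fin, fail}"
    then have "card (succs E u) = 2" using st unfolding standing_assms_def by auto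
    then obtain a b where ab: "succs E u = {a, b}" "a \<noteq> b" by (auto simp: card_2_iff)
    obtain j where j: "j \<le> m" "u \<in> Sp j" using inS u by auto
    from cond[OF j] show "\<exists>w. (\<forall>t\<in>succs E u. w t > 0) \<and> sum w (succs E u) = 1
               \<and> (\<Sum>t\<in>succs E u. w t * f t) = f u"
    proof
      assume "\<exists>i k. i < j \<and> j < k \<and> k \<le> m \<and> succs E u \<inter> Sp i \<noteq> {} \<and> succs E u \<inter> Sp k \<noteq> {}"
      then obtain i k a' b' where ik: "i < j" "j < k" "k \<le> m" and a': "a' \<in> succs E u" "a' \<in> Sp i"
        and b': "b' \<in> succs E u" "b' \<in> Sp k" by blast
      have "a' \<noteq> b'" using disj[of i k] ik a' b' by auto
      then have sab: "succs E u = {a', b'}" using ab a' b' by auto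
      define w where "w t = (if t = a' then (real k - real j) / (real k - real i)
                              else (real j - real i) / (real k - real i))" for t
      have fa: "f a' = real i / real m" using fSp a' ik by auto
      have fb: "f b' = real k / real m" using fSp b' ik by auto
      have fu: "f u = real j / real m" using fSp j by auto
      have kpos: "real k - real i > 0" using ik by auto
      show ?thesis
      proof (intro exI conjI)
        show "\<forall>t\<in>succs E u. 0 < w t" using ik unfolding sab w_def by auto
        have "(real k - real j) / (real k - real i) + (real j - real i) / (real k - real i)
              = ((real k - real j) + (real j - real i)) / (real k - real i)"
          by (rule add_divide_distrib[symmetric])
        also have "\<dots> = 1" using kpos by simp
        finally have eq: "(real k - real j) / (real k - real i) + (real j - real i) / (real k - real i) = 1" .
        have "sum w {a', b'} = w a' + w b'" using \<open>a' \<noteq> b'\<close> by simp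
        moreover have "w a' = (real k - real j) / (real k - real i)" unfolding w_def by simp
        moreover have "w b' = (real j - real i) / (real k - real i)" unfolding w_def using \<open>a' \<noteq> b'\<close> by simp
        ultimately show "sum w (succs E u) = 1" unfolding sab using eq by simp
        have "(\<Sum>t\<in>succs E u. w t * f t) = w a' * f a' + w b' * f b'"
          using \<open>a' \<noteq> b'\<close> unfolding sab by simp
        also have "\<dots> = (real k - real j) / (real k - real i) * (real i / real m)
             + (real j - real i) / (real k - real i) * (real k / real m)"
          unfolding w_def fa fb using \<open>a' \<noteq> b'\<close> by simp
        also have "\<dots> = real j / real m" using kpos m0 by (intro comb) auto
        finally show "(\<Sum>t\<in>succs E u. w t * f t) = f u" using fu by simp
      qed
    next
      assume sub: "succs E u \<subseteq> Sp j"
      have "f a = f u" "f b = f u" using fSp j sub ab by auto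
      then show ?thesis using ab by (intro exI[of _ "\<lambda>_. 1/2"]) auto
    qed
  qed
  then obtain val where val: "\<forall>u\<in>S-{fin,fail}. (\<forall>t\<in>succs E u. val u t > 0) \<and> sum (val u) (succs E u) = 1
               \<and> (\<Sum>t\<in>succs E u. val u t * f t) = f u"
    by metis
  have gp: "graph_preserving S E fin fail val" unfolding graph_preserving_def using val by auto
  have rp: "\<forall>s\<in>S. reach_prob val E fin s = f s"
    using main_conv[OF tp st gp ffin ffail fnn] val by auto
  show ?thesis
  proof (intro exI conjI allI impI ballI)
    show "graph_preserving S E fin fail val" by (rule gp)
    fix i j si sj assume ij: "i < j \<and> j \<le> m" and si: "si \<in> Sp i" and sj: "sj \<in> Sp j"
    have "si \<in> S" "sj \<in> S" using un ij si sj by auto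
    then show "reach_prob val E fin si < reach_prob val E fin sj"
      using rp fSp[OF si] fSp[OF sj] ij m0 by (auto simp: divide_strict_right_mono)
  qed
qed

end
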